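(* Let $p,q\geq2$ be relatively prime integers with $p\geq 2q-1$. Then $|L(p,q)\cap D_{p,q}^n|\leq q^{n+1}$ for every integer $n>0$, where $D_{p,q}^n$ is the set of words of length $n$ over $D_{p,q}$.
   Context: For an integer $n>1$, $A_n=\{0,1,\dots,n-1\}$. For every $d\in A_q$ let $k_d\in A_p$ be the unique element with $k_dq\equiv d\pmod p$, and set $D_{p,q}=\{a\in A_{pq}\mid a\equiv k_d\pmod p\text{ for some }d\in A_q\}$. Define $g_{p,q}:A_{pq}\times A_{pq}\to A_{pq}$ by writing $x=x_1q+x_0$, $y=y_1q+y_0$ with $x_0,y_0\in A_q$, $x_1,y_1\in A_p$ (uniquely), and $g_{p,q}(x,y)=x_0p+y_1$; and $F_{p,q}:A_{pq}^{\mathbb{Z}}\to A_{pq}^{\mathbb{Z}}$ by $F_{p,q}(c)(i)=g_{p,q}(g_{p,q}(c(i-1),c(i)),g_{p,q}(c(i),c(i+1)))$. $F_{p,q}$ is a bijection with inverse $F_{q,p}$ (same formulas with $p,q$ exchanged), so $F_{p,q}^n$ is defined for $n\in\mathbb{Z}$. The trace is $\mathrm{tr}_{p,q}(c)=(F_{p,q}^n(c)(1))_{n\in\mathbb{Z}}$, and $L(p,q)$ is the set of all finite words $u(1)\cdots u(m)$ over $A_{pq}$ such that for some $c\in A_{pq}^{\mathbb{Z}}$ and $n_0\in\mathbb{Z}$, $u(j)=\mathrm{tr}_{p,q}(c)(n_0+j)$ for $1\leq j\leq m$. *)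

theory Defs
  imports "HOL-Number_Theory.Number_Theory"
begin

definition A :: "nat \<Rightarrow> nat set" where
  "A n = {0..<n}"

definition kd :: "nat \<Rightarrow> nat \<Rightarrow> nat \<Rightarrow> nat" where
  "kd p q d = (THE k. k \<in> A p \<and> [k * q = d] (mod p))"

definition D :: "nat \<Rightarrow> nat \<Rightarrow> nat set" where
  "D p q = {a \<in> A (p * q). \<exists>d \<in> A q. [a = kd p q d] (mod p)}"

definition g :: "nat \<Rightarrow> nat \<Rightarrow> nat \<Rightarrow> nat \<Rightarrow> nat" where
  "g p q x y = (x mod q) * p + y div q"

definition F :: "nat \<Rightarrow> nat \<Rightarrow> (int \<Rightarrow> nat) \<Rightarrow> (int \<Rightarrow> nat)" where
  "F p q c = (\<lambda>i. g p q (g p q (c (i - 1)) (c i)) (g p q (c i) (c (i + 1))))"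

definition configs :: "nat \<Rightarrow> (int \<Rightarrow> nat) set" where
  "configs m = {c. \<forall>i. c i \<in> A m}"

text \<open>Integer powers of F_{p,q}; negative powers use the inverse F_{q,p}.\<close>
definition Fpow :: "nat \<Rightarrow> nat \<Rightarrow> int \<Rightarrow> (int \<Rightarrow> nat) \<Rightarrow> (int \<Rightarrow> nat)" where
  "Fpow p q n = (if n \<ge> 0 then (F p q ^^ nat n) else (F q p ^^ nat (- n)))"

definition tr :: "nat \<Rightarrow> nat \<Rightarrow> (int \<Rightarrow> nat) \<Rightarrow> (int \<Rightarrow> nat)" where
  "tr p q c = (\<lambda>n. Fpow p q n c 1)"

definition L :: "nat \<Rightarrow> nat \<Rightarrow> nat list set" where
  "L p q = {u. \<exists>c \<in> configs (p * q). \<exists>n0::int.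
              \<forall>j \<in> {1..length u}. u ! (j - 1) = tr p q c (n0 + int j)}"

definition words :: "nat set \<Rightarrow> nat \<Rightarrow> nat list set" where
  "words S n = {u. length u = n \<and> set u \<subseteq> S}"

end

theory Submission
  imports Defs
begin

lemma g_lt:
  assumes "0 < p" "0 < q" "y < p * q"
  shows "g p q x y < p * q"
proof -
  have a: "y div q < p" using assms by (simp add: div_less_iff_less_mult mult.commute)
  have b: "x mod q + 1 \<le> q" using assms by (simp add: Suc_leI)
  have "(x mod q + 1) * p \<le> q * p" using b by (rule mult_le_mono1)
  then show ?thesis unfolding g_def using a by (simp add: algebra_simps)
qed

lemma g_inv:
  assumes "0 < p" "0 < q" "y < p * q" "z < p * q"
  shows "g p q (g q p x y) (g q p y z) = y"
proof -
  have a: "y div p < q" using assms by (simp add: div_less_iff_less_mult mult.commute)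
  have b: "z div p < q" using assms by (simp add: div_less_iff_less_mult mult.commute)
  have 1: "((x mod p) * q + y div p) mod q = y div p" using a by simp
  have 2: "((y mod p) * q + z div p) div q = y mod p" using b assms by simp
  show ?thesis unfolding g_def 1 2 by simp
qed

lemma F_configs:
  assumes "0 < p" "0 < q" "c \<in> configs (p * q)"
  shows "F p q c \<in> configs (p * q)" "F q p c \<in> configs (p * q)"
proof -
  have c: "\<And>i. c i < p * q" using assms by (simp add: configs_def A_def)
  show "F p q c \<in> configs (p * q)"
    unfolding configs_def A_def F_def using g_lt[OF assms(1,2)] c by simp
  have c': "\<And>i. c i < q * p" using c by (simp add: mult.commute)
  show "F q p c \<in> configs (p * q)"
    unfolding configs_def A_def F_def using g_lt[OF assms(2,1)] c' by (simp add: mult.commute)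
qed

lemma F_inv:
  assumes "0 < p" "0 < q" "c \<in> configs (p * q)"
  shows "F p q (F q p c) = c"
proof
  fix i
  have c: "\<And>i. c i < q * p" using assms by (simp add: configs_def A_def mult.commute)
  define s where "s j = g q p (c j) (c (j+1))" for j
  have s: "\<And>j. s j < p * q" unfolding s_def using g_lt[OF assms(2,1)] c by (simp add: mult.commute)
  have x: "\<And>j. F q p c j = g q p (s (j - 1)) (s j)" unfolding F_def s_def by simp
  have e1: "g p q (F q p c (i - 1)) (F q p c i) = s (i - 1)"
    unfolding x using g_inv[OF assms(1,2) s s] by simp
  have e2: "g p q (F q p c i) (F q p c (i + 1)) = s i"
    unfolding x using g_inv[OF assms(1,2) s s] by simp
  have e3: "g p q (s (i - 1)) (s i) = c i"
    unfolding s_def using g_inv[OF assms(1,2), of "c i" "c (i+1)" "c (i - 1)"] c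
    by (simp add: mult.commute)
  show "F p q (F q p c) i = c i" unfolding F_def[of p q "F q p c"] e1 e2 e3 ..
qed

lemma Fpow_configs:
  assumes "0 < p" "0 < q" "c \<in> configs (p * q)"
  shows "Fpow p q k c \<in> configs (p * q)"
proof -
  have "(F p q ^^ m) c \<in> configs (p * q)" for m
    by (induction m) (use F_configs[OF assms(1,2)] assms(3) in auto)
  moreover have "(F q p ^^ m) c \<in> configs (p * q)" for m
    by (induction m) (use F_configs[OF assms(1,2)] assms(3) in auto)
  ultimately show ?thesis unfolding Fpow_def by simp
qed

lemma Fpow_succ:
  assumes "0 < p" "0 < q" "c \<in> configs (p * q)"
  shows "Fpow p q (k + 1) c = F p q (Fpow p q k c)"
proof (cases "k \<ge> 0")
  case True
  then have "nat (k + 1) = Suc (nat k)" by simp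
  then show ?thesis using True unfolding Fpow_def by simp
next
  case False
  define m where "m = nat (- k - 1)"
  have k: "nat (- k) = Suc m" using False m_def by simp
  have cm: "(F q p ^^ m) c \<in> configs (p * q)"
    by (induction m) (use F_configs[OF assms(1,2)] assms(3) in auto)
  show ?thesis
  proof (cases "k = -1")
    case True
    then show ?thesis unfolding Fpow_def using F_inv[OF assms] by simp
  next
    case False2: False
    then have "\<not> k + 1 \<ge> 0" "nat (- (k+1)) = m" using False m_def by auto
    then show ?thesis unfolding Fpow_def using False k F_inv[OF assms(1,2) cm] by simp
  qed
qed

lemma kd_prop:
  assumes "p \<ge> 2" "coprime p q"
  shows "kd p q d < p \<and> [kd p q d * q = d] (mod p)"
proof -
  have cq: "coprime q p" using assms by (simp add: coprime_commute)
  obtain x where x: "[q * x = 1] (mod p)" using cong_solve_coprime_nat[OF cq] by auto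
  define k where "k = (x * d) mod p"
  have "[k * q = (x * d) * q] (mod p)" unfolding k_def by (simp add: cong_def mod_mult_left_eq)
  moreover have "[(x * d) * q = (q * x) * d] (mod p)" by (simp add: algebra_simps)
  moreover have "[(q * x) * d = 1 * d] (mod p)" using x by (rule cong_mult)(rule cong_refl)
  ultimately have kq: "[k * q = d] (mod p)" by (metis cong_trans mult_1)
  have kp: "k < p" unfolding k_def using assms by simp
  have ex: "\<exists>!k. k \<in> A p \<and> [k * q = d] (mod p)"
  proof
    show "k \<in> A p \<and> [k * q = d] (mod p)" using kq kp by (simp add: A_def)
  next
    fix k' assume h: "k' \<in> A p \<and> [k' * q = d] (mod p)"
    then have "[k' * q = k * q] (mod p)" using kq by (metis cong_sym cong_trans)
    then have "[k' = k] (mod p)" using cq cong_mult_rcancel_nat by blast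
    then show "k' = k" using h kp by (simp add: A_def cong_less_modulus_unique_nat)
  qed
  have "kd p q d \<in> A p \<and> [kd p q d * q = d] (mod p)"
    unfolding kd_def by (rule theI'[OF ex])
  then show ?thesis by (simp add: A_def)
qed

lemma D_prop:
  assumes "p \<ge> 2" "coprime p q" "q \<le> p" "a \<in> D p q"
  shows "((a mod p) * q) mod p < q"
proof -
  obtain d where d: "d < q" "[a = kd p q d] (mod p)" using assms(4) by (auto simp: D_def A_def)
  have "[(a mod p) * q = a * q] (mod p)" by (simp add: cong_def mod_mult_left_eq)
  moreover have "[a * q = kd p q d * q] (mod p)" using d(2) by (simp add: cong_mult)
  moreover have "[kd p q d * q = d] (mod p)" using kd_prop[OF assms(1,2)] by blast
  ultimately have "[(a mod p) * q = d] (mod p)" by (metis cong_trans)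
  then have "((a mod p) * q) mod p = d" using d(1) assms(3) by (simp add: cong_def)
  then show ?thesis using d(1) by simp
qed

lemma arith_step:
  fixes m w V p q :: nat
  assumes "q \<ge> 2" "2 * q - 1 \<le> p" "m * p \<le> V" "V < m * p + p"
    "w * q \<le> V" "V < w * q + q" "(w * q) mod p < q"
  shows "m * p \<le> w * q \<and> w * q < m * p + q"
proof -
  define r where "r = (w * q) div p"
  define s where "s = (w * q) mod p"
  have wq: "w * q = r * p + s" unfolding r_def s_def by simp
  have "r * p < (m + 1) * p" using wq assms by simp
  then have rm: "r \<le> m" using less_Suc_eq_le mult_less_cancel2 by (metis Suc_eq_plus1)
  have "m * p < (r + 1) * p" using wq assms s_def by simp
  then have mr: "m \<le> r" using less_Suc_eq_le mult_less_cancel2 by (metis Suc_eq_plus1)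
  have "r = m" using rm mr by simp
  then show ?thesis using wq assms s_def by simp
qed

lemma step:
  assumes "p \<ge> 2" "q \<ge> 2" "coprime p q" "2 * q - 1 \<le> p"
    "c \<in> configs (p * q)" "F p q c 1 \<in> D p q"
  shows "(c 1 mod q) * p \<le> (F p q c 1 mod p) * q \<and> (F p q c 1 mod p) * q < (c 1 mod q) * p + q"
proof -
  have c2: "c 2 < p * q" using assms(5) by (simp add: configs_def A_def)
  define V where "V = (c 1 mod q) * p + c 2 div q"
  define U where "U = g p q (c 0) (c 1)"
  have y: "F p q c 1 = (U mod q) * p + V div q" unfolding F_def U_def V_def g_def by simp
  have c2q: "c 2 div q < p" using c2 assms by (simp add: div_less_iff_less_mult)
  have "V < (c 1 mod q) * p + p" unfolding V_def using c2q by simp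
  also have "\<dots> = (c 1 mod q + 1) * p" by simp
  also have "\<dots> \<le> q * p" using assms(2) by (intro mult_le_mono1) (simp add: Suc_leI)
  finally have "V < p * q" by (simp add: mult.commute)
  then have Vq: "V div q < p" using assms by (simp add: div_less_iff_less_mult)
  have ym: "F p q c 1 mod p = V div q" unfolding y using Vq by simp
  have qp: "q \<le> p" using assms by simp
  have D: "((F p q c 1 mod p) * q) mod p < q" by (rule D_prop[OF assms(1,3) qp assms(6)])
  show ?thesis unfolding ym
  proof (rule arith_step[OF assms(2,4)])
    show "c 1 mod q * p \<le> V" "V < c 1 mod q * p + p" unfolding V_def using c2q by auto
    show "V div q * q \<le> V" by simp
    show "V < V div q * q + q" using assms
      by (metis add.commute div_mult_mod_eq mod_less_divisor nat_add_left_cancel_less order_less_le_trans zero_less_numeral less_le_trans)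
    show "V div q * q mod p < q" using D ym by simp
  qed
qed

lemma wordstep:
  assumes "p \<ge> 2" "q \<ge> 2" "coprime p q" "2 * q - 1 \<le> p"
    "u \<in> L p q" "set u \<subseteq> D p q" "Suc j < length u"
  shows "(u ! j mod q) * p \<le> (u ! Suc j mod p) * q \<and> (u ! Suc j mod p) * q < (u ! j mod q) * p + q"
proof -
  have pq: "0 < p" "0 < q" using assms by auto
  obtain c n0 where c: "c \<in> configs (p * q)"
    and h: "\<forall>j \<in> {1..length u}. u ! (j - 1) = tr p q c (n0 + int j)"
    using assms(5) unfolding L_def by blast
  define c' where "c' = Fpow p q (n0 + int (Suc j)) c"
  have c'c: "c' \<in> configs (p * q)" unfolding c'_def by (rule Fpow_configs[OF pq c])
  have 1: "u ! j = c' 1" using h[rule_format, of "Suc j"] assms(7) unfolding c'_def tr_def by simp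
  have "u ! Suc j = tr p q c (n0 + int (Suc (Suc j)))" using h[rule_format, of "Suc (Suc j)"] assms(7) by simp
  also have "\<dots> = Fpow p q (n0 + int (Suc j) + 1) c 1" unfolding tr_def by (simp add: algebra_simps)
  also have "\<dots> = F p q c' 1" unfolding c'_def Fpow_succ[OF pq c] ..
  finally have 2: "u ! Suc j = F p q c' 1" .
  have "u ! Suc j \<in> D p q" using assms(6,7) by (meson nth_mem subsetD)
  then show ?thesis unfolding 1 2 using step[OF assms(1-4) c'c] by (simp add: 2)
qed

lemma card_D:
  assumes "p \<ge> 2"
  shows "card (D p q) \<le> q * q"
proof -
  have "D p q \<subseteq> (\<lambda>(d, t). kd p q d mod p + p * t) ` (A q \<times> A q)"
  proof
    fix a assume a: "a \<in> D p q"
    then obtain d where d: "d < q" "[a = kd p q d] (mod p)" by (auto simp: D_def A_def)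
    have "a < p * q" using a by (simp add: D_def A_def)
    then have ad: "a div p < q" using assms by (simp add: div_less_iff_less_mult mult.commute)
    have "a = kd p q d mod p + p * (a div p)" using d(2) by (metis cong_def div_mult_mod_eq add.commute mult.commute)
    then show "a \<in> (\<lambda>(d, t). kd p q d mod p + p * t) ` (A q \<times> A q)"
      using d(1) ad by (auto simp: A_def intro!: image_eqI[where x="(d, a div p)"])
  qed
  then have "card (D p q) \<le> card ((\<lambda>(d, t). kd p q d mod p + p * t) ` (A q \<times> A q))"
    by (intro card_mono) (auto simp: A_def)
  also have "\<dots> \<le> card (A q \<times> A q)" by (rule card_image_le) (simp add: A_def)
  also have "\<dots> = q * q" by (simp add: A_def card_cartesian_product)
  finally show ?thesis .
qed

theorem lemma6:
  fixes p q n :: nat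
  assumes "p \<ge> 2" and "q \<ge> 2" and "coprime p q" and "p \<ge> 2 * q - 1" and "n > 0"
  shows "card (L p q \<inter> words (D p q) n) \<le> q ^ (n + 1)"
proof -
  define S where "S = L p q \<inter> words (D p q) n"
  define \<phi> where "\<phi> u = (hd u, map (\<lambda>x. x div p) (tl u))" for u :: "nat list"
  define T where "T = D p q \<times> {xs. set xs \<subseteq> {..<q} \<and> length xs = n - 1}"
  have Dlt: "\<And>x. x \<in> D p q \<Longrightarrow> x div p < q"
    using assms(1) by (auto simp: D_def A_def div_less_iff_less_mult mult.commute)
  have inj: "inj_on \<phi> S"
  proof
    fix u v assume u: "u \<in> S" and v: "v \<in> S" and e: "\<phi> u = \<phi> v"
    have lu: "length u = n" "set u \<subseteq> D p q" "u \<in> L p q" using u by (auto simp: S_def words_def)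
    have lv: "length v = n" "set v \<subseteq> D p q" "v \<in> L p q" using v by (auto simp: S_def words_def)
    have hd: "hd u = hd v" and tl: "map (\<lambda>x. x div p) (tl u) = map (\<lambda>x. x div p) (tl v)"
      using e by (auto simp: \<phi>_def)
    have "j < n \<Longrightarrow> u ! j = v ! j" for j
    proof (induction j)
      case 0
      then show ?case using hd lu lv by (metis hd_conv_nth length_greater_0_conv)
    next
      case (Suc j)
      have IH: "u ! j = v ! j" using Suc by simp
      have "map (\<lambda>x. x div p) (tl u) ! j = map (\<lambda>x. x div p) (tl v) ! j" using tl by simp
      then have "tl u ! j div p = tl v ! j div p" using Suc.prems lu lv by simp
      moreover have "tl u ! j = u ! Suc j" "tl v ! j = v ! Suc j"
        using Suc.prems lu(1) lv(1) by (simp_all add: nth_tl)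
      ultimately have dv: "u ! Suc j div p = v ! Suc j div p" by simp
      have s1: "(u ! j mod q) * p \<le> (u ! Suc j mod p) * q \<and> (u ! Suc j mod p) * q < (u ! j mod q) * p + q"
        using wordstep[OF assms(1,2,3,4) lu(3) lu(2), of j] Suc.prems lu(1) by simp
      have s2: "(u ! j mod q) * p \<le> (v ! Suc j mod p) * q \<and> (v ! Suc j mod p) * q < (u ! j mod q) * p + q"
        using wordstep[OF assms(1,2,3,4) lv(3) lv(2), of j] Suc.prems lv(1) IH by simp
      have "(u ! Suc j mod p) * q < (v ! Suc j mod p + 1) * q" using s1 s2 by simp
      then have a: "u ! Suc j mod p \<le> v ! Suc j mod p" using less_Suc_eq_le mult_less_cancel2 by (metis Suc_eq_plus1)
      have "(v ! Suc j mod p) * q < (u ! Suc j mod p + 1) * q" using s1 s2 by simp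
      then have b: "v ! Suc j mod p \<le> u ! Suc j mod p" using less_Suc_eq_le mult_less_cancel2 by (metis Suc_eq_plus1)
      have "u ! Suc j mod p = v ! Suc j mod p" using a b by simp
      then show ?case using dv by (metis div_mult_mod_eq)
    qed
    then show "u = v" using lu(1) lv(1) by (intro nth_equalityI) auto
  qed
  have img: "\<phi> ` S \<subseteq> T"
  proof
    fix y assume "y \<in> \<phi> ` S"
    then obtain u where u: "u \<in> S" and y: "y = \<phi> u" by auto
    have lu: "length u = n" "set u \<subseteq> D p q" using u by (auto simp: S_def words_def)
    have "hd u \<in> D p q" using lu assms(5) by (metis hd_in_set length_greater_0_conv subsetD)
    moreover have "set (map (\<lambda>x. x div p) (tl u)) \<subseteq> {..<q}"
      proof -
      have "set (tl u) \<subseteq> set u" by (cases u) auto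
      then show ?thesis using lu(2) Dlt by auto
    qed
    ultimately show "y \<in> T" unfolding y \<phi>_def T_def using lu(1) by simp
  qed
  have fin: "finite T" unfolding T_def
    by (intro finite_cartesian_product finite_lists_length_eq) (auto simp: D_def A_def)
  have "card S \<le> card T" using card_inj_on_le[OF inj img fin] .
  also have "card T = card (D p q) * q ^ (n - 1)" unfolding T_def
    by (simp add: card_cartesian_product card_lists_length_eq)
  also have "\<dots> \<le> q * q * q ^ (n - 1)" using card_D[OF assms(1)] by simp
  also have "\<dots> = q ^ (n + 1)" using assms(5)
    by (metis Suc_diff_1 add.commute plus_1_eq_Suc power_Suc mult.assoc)
  finally show ?thesis unfolding S_def .
qed

end
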